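(* Let $X\subset\mathbb{R}^n$ be a finite set of points and let $G\subset\mathbb{R}[x_1,\ldots,x_n]$ be a set of polynomials with $\mathcal I(X)=\langle G\rangle$. Let $t$ be a positive integer and suppose that every $\widetilde g\in\mathcal I(X)$ of degree at most $t$ satisfies $\widetilde g\in\langle G^t\rangle$. Then for any $g\in\mathcal I(X)$ of degree at most $t+1$, if $(\partial g/\partial x_k)(X)=\boldsymbol 0$ for all $k\in\{1,\ldots,n\}$, then $g\in\langle G^t\rangle$.
   Context: $\mathcal I(X)=\{g\in\mathbb{R}[x_1,\ldots,x_n]:g(\boldsymbol x)=0\ \forall\boldsymbol x\in X\}$; for a polynomial $h$, $h(X)$ is the vector of its values at the points of $X$. $\langle S\rangle$ is the ideal generated by $S$; $G^t$ is the set of elements of $G$ of degree at most $t$. *)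

theory Defs
  imports Complex_Main "HOL-Library.Poly_Mapping"
begin

text \<open>Multivariate real polynomials: finitely supported maps from monomials
(exponent vectors) to real coefficients.  Variable x_(k+1) of the
paper is index k here; R[x_1..x_n] is the set of polynomials using only
variables with index < n.  Points of R^n are functions nat \<Rightarrow> real that vanish
at indices \<ge> n.\<close>

type_synonym mpoly = "((nat, nat) poly_mapping, real) poly_mapping"

definition poly_ring :: "nat \<Rightarrow> mpoly set" where
  "poly_ring n = {p. \<forall>m \<in> Poly_Mapping.keys p. Poly_Mapping.keys m \<subseteq> {..<n}}"

definition point_space :: "nat \<Rightarrow> (nat \<Rightarrow> real) set" where
  "point_space n = {x. \<forall>i\<ge>n. x i = 0}"

definition eval_mpoly :: "mpoly \<Rightarrow> (nat \<Rightarrow> real) \<Rightarrow> real" where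
  "eval_mpoly p x = (\<Sum>m\<in>Poly_Mapping.keys p. Poly_Mapping.lookup p m * (\<Prod>i\<in>Poly_Mapping.keys m. x i ^ Poly_Mapping.lookup m i))"

definition mon_deg :: "(nat, nat) poly_mapping \<Rightarrow> nat" where
  "mon_deg m = (\<Sum>i\<in>Poly_Mapping.keys m. Poly_Mapping.lookup m i)"

text \<open>Total degree (the zero polynomial gets degree 0).\<close>
definition total_deg :: "mpoly \<Rightarrow> nat" where
  "total_deg p = Max (insert 0 (mon_deg ` Poly_Mapping.keys p))"

definition pderiv_mpoly :: "nat \<Rightarrow> mpoly \<Rightarrow> mpoly" where
  "pderiv_mpoly k p =
     (\<Sum>m\<in>Poly_Mapping.keys p. Poly_Mapping.single (m - Poly_Mapping.single k 1)
                    (of_nat (Poly_Mapping.lookup m k) * Poly_Mapping.lookup p m))"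

definition vanishing_ideal :: "nat \<Rightarrow> (nat \<Rightarrow> real) set \<Rightarrow> mpoly set" where
  "vanishing_ideal n X = {g \<in> poly_ring n. \<forall>x\<in>X. eval_mpoly g x = 0}"

definition ideal_gen :: "nat \<Rightarrow> mpoly set \<Rightarrow> mpoly set" where
  "ideal_gen n S = {p. \<exists>F c. finite F \<and> F \<subseteq> S \<and> (\<forall>s\<in>F. c s \<in> poly_ring n)
                         \<and> p = (\<Sum>s\<in>F. c s * s)}"

definition deg_trunc :: "mpoly set \<Rightarrow> nat \<Rightarrow> mpoly set" where
  "deg_trunc G t = {g \<in> G. total_deg g \<le> t}"

end

theory Submission
  imports Defs
begin

lemma lookup_single_mult_gen:
  "Poly_Mapping.lookup (Poly_Mapping.single a c * (p::mpoly)) k = c * (\<Sum>q. Poly_Mapping.lookup p q when k = a + q)"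
  by (simp add: lookup_mult lookup_single when_mult Sum_any_right_distrib[symmetric] mult_when)

lemma lookup_single_mult:
  "Poly_Mapping.lookup (Poly_Mapping.single a c * (p::mpoly)) (a + m) = c * Poly_Mapping.lookup p m"
  by (simp add: lookup_single_mult_gen)

lemma lookup_single_mult0:
  "(\<forall>m. k \<noteq> a + m) \<Longrightarrow> Poly_Mapping.lookup (Poly_Mapping.single a c * (p::mpoly)) k = 0"
  by (simp add: lookup_single_mult_gen)

lemma lookup_const_mult:
  "Poly_Mapping.lookup (Poly_Mapping.single 0 c * (p::mpoly)) m = c * Poly_Mapping.lookup p m"
  using lookup_single_mult[of 0 c p m] by simp

definition mon :: "(nat, nat) poly_mapping \<Rightarrow> (nat \<Rightarrow> real) \<Rightarrow> real" where
  "mon m x = (\<Prod>i\<in>Poly_Mapping.keys m. x i ^ Poly_Mapping.lookup m i)"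

lemma mon_superset:
  assumes "finite S" "Poly_Mapping.keys m \<subseteq> S"
  shows "mon m x = (\<Prod>i\<in>S. x i ^ Poly_Mapping.lookup m i)"
  unfolding mon_def
  by (rule prod.mono_neutral_left) (use assms in \<open>auto simp: in_keys_iff\<close>)

lemma mon_add: "mon (a + b) x = mon a x * mon b x"
proof -
  let ?S = "Poly_Mapping.keys a \<union> Poly_Mapping.keys b"
  have "mon (a + b) x = (\<Prod>i\<in>?S. x i ^ Poly_Mapping.lookup (a + b) i)"
    by (rule mon_superset) (auto dest: keys_add[THEN subsetD])
  also have "\<dots> = (\<Prod>i\<in>?S. x i ^ Poly_Mapping.lookup a i) * (\<Prod>i\<in>?S. x i ^ Poly_Mapping.lookup b i)"
    by (simp add: lookup_add power_add prod.distrib)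
  also have "\<dots> = mon a x * mon b x"
    using mon_superset[of ?S a x] mon_superset[of ?S b x] by simp
  finally show ?thesis .
qed

lemma mon_var: "mon (Poly_Mapping.single k 1) x = x k"
  by (simp add: mon_def)

lemma mon_zero: "mon 0 x = 1"
  by (simp add: mon_def)

lemma eval_superset:
  assumes "finite S" "Poly_Mapping.keys p \<subseteq> S"
  shows "eval_mpoly p x = (\<Sum>m\<in>S. Poly_Mapping.lookup p m * mon m x)"
  unfolding eval_mpoly_def mon_def[symmetric]
  by (rule sum.mono_neutral_left) (use assms in \<open>auto simp: in_keys_iff\<close>)

lemma eval_add: "eval_mpoly (p + q) x = eval_mpoly p x + eval_mpoly q x"
proof -
  let ?S = "Poly_Mapping.keys p \<union> Poly_Mapping.keys q"
  have "eval_mpoly (p + q) x = (\<Sum>m\<in>?S. Poly_Mapping.lookup (p + q) m * mon m x)"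
    by (rule eval_superset) (auto dest: keys_add[THEN subsetD])
  also have "\<dots> = (\<Sum>m\<in>?S. Poly_Mapping.lookup p m * mon m x) + (\<Sum>m\<in>?S. Poly_Mapping.lookup q m * mon m x)"
    by (simp add: lookup_add distrib_right sum.distrib)
  also have "\<dots> = eval_mpoly p x + eval_mpoly q x"
    using eval_superset[of ?S p x] eval_superset[of ?S q x] by simp
  finally show ?thesis .
qed

lemma eval_zero: "eval_mpoly 0 x = 0"
  by (simp add: eval_mpoly_def)

lemma eval_sum: "eval_mpoly (sum f I) x = (\<Sum>i\<in>I. eval_mpoly (f i) x)"
  by (induction I rule: infinite_finite_induct) (auto simp: eval_zero eval_add)

lemma eval_single_mult:
  "eval_mpoly (Poly_Mapping.single a c * p) x = c * mon a x * eval_mpoly p x"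
proof -
  let ?S = "(\<lambda>m. a + m) ` Poly_Mapping.keys p"
  have sub: "Poly_Mapping.keys (Poly_Mapping.single a c * p) \<subseteq> ?S"
  proof
    fix k assume "k \<in> Poly_Mapping.keys (Poly_Mapping.single a c * p)"
    then obtain a' b where "k = a' + b" "a' \<in> Poly_Mapping.keys (Poly_Mapping.single a c)" "b \<in> Poly_Mapping.keys p"
      using keys_mult by blast
    then show "k \<in> ?S" by (auto split: if_splits)
  qed
  have "eval_mpoly (Poly_Mapping.single a c * p) x = (\<Sum>m\<in>?S. Poly_Mapping.lookup (Poly_Mapping.single a c * p) m * mon m x)"
    by (rule eval_superset[OF _ sub]) simp
  also have "\<dots> = (\<Sum>m\<in>Poly_Mapping.keys p. Poly_Mapping.lookup (Poly_Mapping.single a c * p) (a + m) * mon (a + m) x)"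
    by (subst sum.reindex) (auto simp: inj_on_def)
  also have "\<dots> = (\<Sum>m\<in>Poly_Mapping.keys p. c * mon a x * (Poly_Mapping.lookup p m * mon m x))"
    by (rule sum.cong) (simp_all only: lookup_single_mult mon_add, simp add: mult_ac)
  also have "\<dots> = c * mon a x * eval_mpoly p x"
    by (simp add: sum_distrib_left eval_mpoly_def mon_def)
  finally show ?thesis .
qed


lemma minus_var_add:
  fixes m :: "(nat, nat) poly_mapping"
  assumes "Poly_Mapping.lookup m k \<noteq> 0"
  shows "m = (m - Poly_Mapping.single k 1) + Poly_Mapping.single k 1"
  by (rule poly_mapping_eqI) (use assms in \<open>auto simp: lookup_add lookup_minus lookup_single when_def\<close>)

lemma lookup_pderiv:
  "Poly_Mapping.lookup (pderiv_mpoly k p) m' =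
     of_nat (Poly_Mapping.lookup m' k + 1) * Poly_Mapping.lookup p (m' + Poly_Mapping.single k 1)"
proof -
  let ?e = "Poly_Mapping.single k (1::nat)"
  have "Poly_Mapping.lookup (pderiv_mpoly k p) m' =
     (\<Sum>m\<in>Poly_Mapping.keys p. (of_nat (Poly_Mapping.lookup m k) * Poly_Mapping.lookup p m when m - ?e = m'))"
    by (simp add: pderiv_mpoly_def lookup_sum lookup_single)
  also have "\<dots> = (\<Sum>m\<in>Poly_Mapping.keys p. (if m = m' + ?e then of_nat (Poly_Mapping.lookup m k) * Poly_Mapping.lookup p m else 0))"
  proof (rule sum.cong)
    fix m assume "m \<in> Poly_Mapping.keys p"
    show "(of_nat (Poly_Mapping.lookup m k) * Poly_Mapping.lookup p m when m - ?e = m') =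
          (if m = m' + ?e then of_nat (Poly_Mapping.lookup m k) * Poly_Mapping.lookup p m else 0)"
    proof (cases "m = m' + ?e")
      case True then show ?thesis by simp
    next
      case False
      have "Poly_Mapping.lookup m k = 0" if "m - ?e = m'"
        using minus_var_add[of m k] that False by auto
      then show ?thesis using False by (auto simp: when_def)
    qed
  qed simp
  also have "\<dots> = of_nat (Poly_Mapping.lookup m' k + 1) * Poly_Mapping.lookup p (m' + ?e)"
    by (simp add: sum.delta' lookup_add in_keys_iff)
  finally show ?thesis .
qed

lemma lookup_var_pderiv:
  "Poly_Mapping.lookup (Poly_Mapping.single (Poly_Mapping.single k 1) 1 * pderiv_mpoly k p) m =
     of_nat (Poly_Mapping.lookup m k) * Poly_Mapping.lookup p m"
proof (cases "Poly_Mapping.lookup m k = 0")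
  case True
  have "\<forall>m''. m \<noteq> Poly_Mapping.single k 1 + m''"
    using True by (auto simp: lookup_add)
  then show ?thesis using True by (simp add: lookup_single_mult0)
next
  case False
  let ?e = "Poly_Mapping.single k (1::nat)"
  have m: "m = ?e + (m - ?e)" using minus_var_add[OF False] by (simp add: add.commute)
  have "Poly_Mapping.lookup (Poly_Mapping.single ?e 1 * pderiv_mpoly k p) m
     = Poly_Mapping.lookup (pderiv_mpoly k p) (m - ?e)"
    using lookup_single_mult[of ?e 1 "pderiv_mpoly k p" "m - ?e"] m by simp
  also have "\<dots> = of_nat (Poly_Mapping.lookup m k) * Poly_Mapping.lookup p m"
    using False m by (simp add: lookup_pderiv lookup_minus add.commute)
  finally show ?thesis .
qed

lemma mon_deg_superset:
  assumes "finite S" "Poly_Mapping.keys m \<subseteq> S"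
  shows "mon_deg m = (\<Sum>i\<in>S. Poly_Mapping.lookup m i)"
  unfolding mon_deg_def
  by (rule sum.mono_neutral_left) (use assms in \<open>auto simp: in_keys_iff\<close>)

lemma mon_deg_add: "mon_deg (a + b) = mon_deg a + mon_deg b"
proof -
  let ?S = "Poly_Mapping.keys a \<union> Poly_Mapping.keys b"
  have "mon_deg (a + b) = (\<Sum>i\<in>?S. Poly_Mapping.lookup (a + b) i)"
    by (rule mon_deg_superset) (auto dest: keys_add[THEN subsetD])
  also have "\<dots> = (\<Sum>i\<in>?S. Poly_Mapping.lookup a i) + (\<Sum>i\<in>?S. Poly_Mapping.lookup b i)"
    by (simp add: lookup_add sum.distrib)
  also have "\<dots> = mon_deg a + mon_deg b"
    using mon_deg_superset[of ?S a] mon_deg_superset[of ?S b] by simp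
  finally show ?thesis .
qed

lemma mon_deg_var: "mon_deg (Poly_Mapping.single k 1) = 1"
  by (simp add: mon_deg_def)

lemma mon_deg_le_total: "m \<in> Poly_Mapping.keys p \<Longrightarrow> mon_deg m \<le> total_deg p"
  unfolding total_deg_def by (rule Max_ge) auto

lemma total_deg_le: "(\<And>m. m \<in> Poly_Mapping.keys p \<Longrightarrow> mon_deg m \<le> d) \<Longrightarrow> total_deg p \<le> d"
  unfolding total_deg_def by (subst Max_le_iff) auto

lemma poly_ring_zero: "0 \<in> poly_ring n"
  by (simp add: poly_ring_def)

lemma poly_ring_add: "p \<in> poly_ring n \<Longrightarrow> q \<in> poly_ring n \<Longrightarrow> p + q \<in> poly_ring n"
  unfolding poly_ring_def by (auto dest: keys_add[THEN subsetD])

lemma poly_ring_mult: "p \<in> poly_ring n \<Longrightarrow> q \<in> poly_ring n \<Longrightarrow> p * q \<in> poly_ring n"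
  unfolding poly_ring_def by (fastforce dest!: keys_mult[THEN subsetD] keys_add[THEN subsetD])

lemma ideal_zero: "0 \<in> ideal_gen n T"
  unfolding ideal_gen_def by (rule CollectI, rule exI[of _ "{}"]) auto

lemma ideal_add:
  assumes "p \<in> ideal_gen n T" "q \<in> ideal_gen n T"
  shows "p + q \<in> ideal_gen n T"
proof -
  obtain F1 c1 where 1: "finite F1" "F1 \<subseteq> T" "\<forall>s\<in>F1. c1 s \<in> poly_ring n" "p = (\<Sum>s\<in>F1. c1 s * s)"
    using assms(1) unfolding ideal_gen_def by blast
  obtain F2 c2 where 2: "finite F2" "F2 \<subseteq> T" "\<forall>s\<in>F2. c2 s \<in> poly_ring n" "q = (\<Sum>s\<in>F2. c2 s * s)"
    using assms(2) unfolding ideal_gen_def by blast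
  define c where "c s = (if s \<in> F1 then c1 s else 0) + (if s \<in> F2 then c2 s else 0)" for s
  have "(\<Sum>s\<in>F1 \<union> F2. (if s \<in> F1 then c1 s else 0) * s) = p"
    unfolding 1(4) by (rule sum.mono_neutral_cong_right) (use 1 2 in auto)
  moreover have "(\<Sum>s\<in>F1 \<union> F2. (if s \<in> F2 then c2 s else 0) * s) = q"
    unfolding 2(4) by (rule sum.mono_neutral_cong_right) (use 1 2 in auto)
  ultimately have "p + q = (\<Sum>s\<in>F1 \<union> F2. c s * s)"
    by (simp add: c_def distrib_right sum.distrib)
  moreover have "\<forall>s\<in>F1 \<union> F2. c s \<in> poly_ring n"
    using 1 2 by (auto simp: c_def poly_ring_add poly_ring_zero)
  ultimately show ?thesis unfolding ideal_gen_def mem_Collect_eq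
    by (intro exI[of _ "F1 \<union> F2"] exI[of _ c]) (use 1 2 in simp)
qed

lemma ideal_mult:
  assumes "r \<in> poly_ring n" "p \<in> ideal_gen n T"
  shows "r * p \<in> ideal_gen n T"
proof -
  obtain F c where 1: "finite F" "F \<subseteq> T" "\<forall>s\<in>F. c s \<in> poly_ring n" "p = (\<Sum>s\<in>F. c s * s)"
    using assms(2) unfolding ideal_gen_def by blast
  have "r * p = (\<Sum>s\<in>F. (r * c s) * s)"
    by (simp add: 1(4) sum_distrib_left mult.assoc)
  moreover have "\<forall>s\<in>F. r * c s \<in> poly_ring n" using 1 assms(1) by (auto intro: poly_ring_mult)
  ultimately show ?thesis unfolding ideal_gen_def mem_Collect_eq
    by (intro exI[of _ F] exI[of _ "\<lambda>s. r * c s"]) (use 1 in simp)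
qed

lemma ideal_sum:
  "(\<And>i. i \<in> I \<Longrightarrow> f i \<in> ideal_gen n T) \<Longrightarrow> sum f I \<in> ideal_gen n T"
  by (induction I rule: infinite_finite_induct) (auto simp: ideal_zero ideal_add)


theorem lemma2:
  fixes n t :: nat and X :: "(nat \<Rightarrow> real) set" and G :: "mpoly set" and g :: mpoly
  assumes "finite X" and "X \<subseteq> point_space n"
    and "G \<subseteq> poly_ring n"
    and "vanishing_ideal n X = ideal_gen n G"
    and "t > 0"
    and "\<forall>h \<in> vanishing_ideal n X. total_deg h \<le> t \<longrightarrow> h \<in> ideal_gen n (deg_trunc G t)"
    and "g \<in> vanishing_ideal n X" and "total_deg g \<le> t + 1"
    and "\<forall>k < n. \<forall>x \<in> X. eval_mpoly (pderiv_mpoly k g) x = 0"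
  shows "g \<in> ideal_gen n (deg_trunc G t)"
proof -
  let ?J = "ideal_gen n (deg_trunc G t)"
  define e :: "nat \<Rightarrow> (nat, nat) poly_mapping" where "e k = Poly_Mapping.single k (1::nat)" for k
  define V :: "nat \<Rightarrow> mpoly" where "V k = Poly_Mapping.single (e k) (1::real)" for k
  define D :: "nat \<Rightarrow> mpoly" where "D k = pderiv_mpoly k g" for k
  define S :: mpoly where "S = (\<Sum>k<n. V k * D k)"
  define c :: real where "c = 1 / (real t + 1)"
  define h :: mpoly where "h = g - Poly_Mapping.single 0 c * S"
  have g_ring: "g \<in> poly_ring n" and g_van: "\<forall>x\<in>X. eval_mpoly g x = 0"
    using assms(7) by (auto simp: vanishing_ideal_def)
  have lookupS: "Poly_Mapping.lookup S m = of_nat (mon_deg m) * Poly_Mapping.lookup g m" for m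
  proof (cases "m \<in> Poly_Mapping.keys g")
    case True
    then have km: "Poly_Mapping.keys m \<subseteq> {..<n}" using g_ring by (auto simp: poly_ring_def)
    have "Poly_Mapping.lookup S m = (\<Sum>k<n. of_nat (Poly_Mapping.lookup m k) * Poly_Mapping.lookup g m)"
      unfolding S_def V_def D_def e_def lookup_sum lookup_var_pderiv by simp
    also have "\<dots> = of_nat (\<Sum>k<n. Poly_Mapping.lookup m k) * Poly_Mapping.lookup g m"
      by (simp add: sum_distrib_right)
    also have "(\<Sum>k<n. Poly_Mapping.lookup m k) = mon_deg m"
      using mon_deg_superset[of "{..<n}" m] km by simp
    finally show ?thesis .
  next
    case False
    then show ?thesis
      unfolding S_def V_def D_def e_def lookup_sum lookup_var_pderiv by (simp add: in_keys_iff)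
  qed
  have lookuph: "Poly_Mapping.lookup h m = (1 - c * of_nat (mon_deg m)) * Poly_Mapping.lookup g m" for m
    unfolding h_def lookup_minus lookup_const_mult lookupS by (simp add: algebra_simps)
  have keysh: "m \<in> Poly_Mapping.keys g \<and> mon_deg m \<noteq> t + 1" if "m \<in> Poly_Mapping.keys h" for m
  proof -
    have "Poly_Mapping.lookup h m \<noteq> 0" using that by (simp add: in_keys_iff)
    then show ?thesis by (auto simp: lookuph in_keys_iff c_def)
  qed
  have h_ring: "h \<in> poly_ring n"
    using g_ring keysh unfolding poly_ring_def by blast
  have h_deg: "total_deg h \<le> t"
  proof (rule total_deg_le)
    fix m assume "m \<in> Poly_Mapping.keys h"
    with keysh have "m \<in> Poly_Mapping.keys g" "mon_deg m \<noteq> t + 1" by auto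
    with mon_deg_le_total[of m g] assms(8) show "mon_deg m \<le> t" by linarith
  qed
  have evalS: "eval_mpoly S x = 0" if "x \<in> X" for x
    using that assms(9)
    by (simp add: S_def eval_sum V_def eval_single_mult D_def)
  have h_van: "eval_mpoly h x = 0" if "x \<in> X" for x
  proof -
    have "g = h + Poly_Mapping.single 0 c * S" by (simp add: h_def)
    then have "eval_mpoly g x = eval_mpoly h x + c * mon 0 x * eval_mpoly S x"
      by (metis eval_add eval_single_mult)
    then show ?thesis using evalS[OF that] g_van that by simp
  qed
  have hJ: "h \<in> ?J"
    using assms(6) h_ring h_deg h_van by (auto simp: vanishing_ideal_def)
  have DJ: "D k \<in> ?J" if "k < n" for k
  proof -
    have keysD: "m' + e k \<in> Poly_Mapping.keys g" if "m' \<in> Poly_Mapping.keys (D k)" for m'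
      using that by (simp add: D_def e_def in_keys_iff lookup_pderiv)
    have "D k \<in> poly_ring n"
      unfolding poly_ring_def
    proof (intro CollectI ballI subsetI)
      fix m' i assume m': "m' \<in> Poly_Mapping.keys (D k)" and i: "i \<in> Poly_Mapping.keys m'"
      have "i \<in> Poly_Mapping.keys (m' + e k)" using i by (simp add: in_keys_iff lookup_add)
      then show "i \<in> {..<n}" using keysD[OF m'] g_ring by (auto simp: poly_ring_def)
    qed
    moreover have "total_deg (D k) \<le> t"
    proof (rule total_deg_le)
      fix m' assume "m' \<in> Poly_Mapping.keys (D k)"
      then have "mon_deg (m' + e k) \<le> t + 1"
        using keysD mon_deg_le_total[of _ g] assms(8) by (meson le_trans)
      then show "mon_deg m' \<le> t" unfolding mon_deg_add e_def mon_deg_var by simp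
    qed
    moreover have "\<forall>x\<in>X. eval_mpoly (D k) x = 0" using assms(9) that by (simp add: D_def)
    ultimately show ?thesis using assms(6) by (auto simp: vanishing_ideal_def)
  qed
  have V_ring: "V k \<in> poly_ring n" if "k < n" for k
    using that by (simp add: V_def e_def poly_ring_def)
  have SJ: "S \<in> ?J"
    unfolding S_def by (rule ideal_sum) (auto intro: ideal_mult V_ring DJ)
  have c_ring: "Poly_Mapping.single 0 c \<in> poly_ring n"
    by (simp add: poly_ring_def)
  have "g = h + Poly_Mapping.single 0 c * S" by (simp add: h_def)
  also have "\<dots> \<in> ?J"
    by (rule ideal_add[OF hJ ideal_mult[OF c_ring SJ]])
  finally show ?thesis .
qed

end
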